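(* Let $q\in[0,1)$, $a\in\mathbb D$, $b_a(z)=\frac{z-a}{1-z\overline a}$ and $b_{a,q}(z)=b_a(\sqrt{1-q}\,z)$. Then the operator $M_{b_{a,q}}$ of multiplication by $b_{a,q}$ is a contraction from $\mathbf H_{2,q}$ into itself; equivalently, the kernel $(1-b_{a,q}(z)\overline{b_{a,q}(w)})E_q(z\overline w)$ is positive definite on $|z|,|w|<1/\sqrt{1-q}$.
   Context: $[0]_q=1$, $[k]_q=1+q+\cdots+q^{k-1}$ ($k\ge1$), $[k]_q!=\prod_{j=1}^k[j]_q$, $[0]_q!=1$. $E_q(x)=\sum_{k\ge0}x^k/[k]_q!=\prod_{j=0}^\infty(1-(1-q)q^jx)^{-1}$ for $|x|<1/(1-q)$. $\mathbf H_{2,q}$ is the reproducing kernel Hilbert space with kernel $E_q(z\overline w)$, consisting of power series $\sum_k a_kz^k$ with $\sum_k[k]_q!|a_k|^2<\infty$; its elements are analytic in $|z|<1/\sqrt{1-q}$. *)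

theory Defs
  imports "HOL-Analysis.Analysis"
begin

definition qint :: "real \<Rightarrow> nat \<Rightarrow> real" where
  "qint q k = (if k = 0 then 1 else (\<Sum>j<k. q ^ j))"

definition qfact :: "real \<Rightarrow> nat \<Rightarrow> real" where
  "qfact q k = (\<Prod>j\<in>{1..k}. qint q j)"

definition Eq :: "real \<Rightarrow> complex \<Rightarrow> complex" where
  "Eq q x = (\<Sum>k. x ^ k / complex_of_real (qfact q k))"

definition blaschke :: "complex \<Rightarrow> complex \<Rightarrow> complex" where
  "blaschke a z = (z - a) / (1 - z * cnj a)"

definition blaschke_q :: "complex \<Rightarrow> real \<Rightarrow> complex \<Rightarrow> complex" where
  "blaschke_q a q z = blaschke a (complex_of_real (sqrt (1 - q)) * z)"

text \<open>Elements of H_{2,q}, represented by their Taylor coefficient sequences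
  (sum_k a_k z^k with sum_k [k]_q! |a_k|^2 < infinity), and the squared norm.\<close>
definition H2q :: "real \<Rightarrow> (nat \<Rightarrow> complex) set" where
  "H2q q = {c. summable (\<lambda>k. qfact q k * (cmod (c k))\<^sup>2)}"

definition H2q_norm :: "real \<Rightarrow> (nat \<Rightarrow> complex) \<Rightarrow> real" where
  "H2q_norm q c = sqrt (\<Sum>k. qfact q k * (cmod (c k))\<^sup>2)"

end

theory Submission imports Defs begin

lemma qint_ge1: "0 \<le> q \<Longrightarrow> qint q k \<ge> 1"
proof (cases k)
  case (Suc m)
  assume q: "0 \<le> q"
  have "(\<Sum>j<Suc m. q ^ j) = 1 + (\<Sum>j<m. q ^ Suc j)"
    by (subst sum.lessThan_Suc_shift) simp
  moreover have "(\<Sum>j<m. q ^ Suc j) \<ge> 0" using q by (intro sum_nonneg) simp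
  ultimately show ?thesis using Suc by (simp add: qint_def)
qed (simp add: qint_def)

lemma qfact_pos: "0 \<le> q \<Longrightarrow> qfact q k > 0"
  unfolding qfact_def by (intro prod_pos) (metis qint_ge1 less_le_trans zero_less_one)

lemma qfact_Suc: "qfact q (Suc k) = qfact q k * qint q (Suc k)"
  unfolding qfact_def by (simp add: prod.nat_ivl_Suc' mult.commute)

lemma qint_Suc_eq: "q < 1 \<Longrightarrow> qint q (Suc k) = (1 - q ^ Suc k) / (1 - q)"
  unfolding qint_def using one_diff_power_eq[of q "Suc k"] by simp

lemma qfact_Suc_s: "0 \<le> q \<Longrightarrow> q < 1 \<Longrightarrow> (1 - q) * qfact q (Suc k) = (1 - q ^ Suc k) * qfact q k"
  by (simp add: qfact_Suc qint_Suc_eq)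

lemma summable_qexp:
  assumes q: "0 \<le> q" "q < 1" and r: "0 \<le> r" "r * (1 - q) < 1"
  shows "summable (\<lambda>k. r ^ k / qfact q k)"
proof -
  define c where "c = (1 + r * (1 - q)) / 2"
  have "r * (1 - q) \<ge> 0" using r q by simp
  then have c1: "c < 1" and c0: "c > 0" using r(2) unfolding c_def by auto
  have rc: "r * (1 - q) < c" using r by (simp add: c_def)
  have "(\<lambda>k. q ^ Suc k) \<longlonglongrightarrow> 0"
    using q by (intro LIMSEQ_Suc LIMSEQ_power_zero) auto
  moreover have "0 < 1 - r * (1 - q) / c" using rc c0 by (simp add: field_simps)
  ultimately have "eventually (\<lambda>k. q ^ Suc k < 1 - r * (1 - q) / c) sequentially"
    by (rule order_tendstoD)
  then obtain N where N: "\<And>k. k \<ge> N \<Longrightarrow> q ^ Suc k < 1 - r * (1 - q) / c"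
    by (auto simp: eventually_sequentially)
  show ?thesis
  proof (rule summable_ratio_test[OF c1])
    fix k assume "k \<ge> N"
    then have h: "r * (1 - q) / c \<le> 1 - q ^ Suc k" using N by force
    have qi: "qint q (Suc k) = (1 - q ^ Suc k) / (1 - q)" using q by (simp add: qint_Suc_eq)
    have "r \<le> c * qint q (Suc k)"
      using h c0 q unfolding qi by (simp add: field_simps)
    then have "r / qint q (Suc k) \<le> c" using qint_ge1[OF q(1), of "Suc k"]
      by (simp add: field_simps)
    moreover have "norm (r ^ Suc k / qfact q (Suc k)) = (r / qint q (Suc k)) * norm (r ^ k / qfact q k)"
      using qfact_pos[OF q(1)] qint_ge1[OF q(1), of "Suc k"] r by (simp add: qfact_Suc abs_mult)
    ultimately show "norm (r ^ Suc k / qfact q (Suc k)) \<le> c * norm (r ^ k / qfact q k)"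
      by (metis mult_right_mono norm_ge_zero)
  qed
qed

lemma amgm: "(w::real) > 0 \<Longrightarrow> 2 * x * y \<le> w * x\<^sup>2 + y\<^sup>2 / w"
proof -
  assume w: "w > 0"
  have "0 \<le> (w * x - y)\<^sup>2 / w" using w by simp
  also have "(w * x - y)\<^sup>2 / w = w * x\<^sup>2 + y\<^sup>2 / w - 2 * x * y"
    using w by (simp add: power2_eq_square field_simps)
  finally show ?thesis by simp
qed

lemma rad_facts:
  assumes "0 \<le> q" "q < 1" "cmod z < 1 / sqrt (1 - q)"
  shows "(cmod z)\<^sup>2 * (1 - q) < 1" "sqrt (1 - q) * cmod z < 1"
proof -
  have s: "sqrt (1 - q) > 0" using assms by simp
  show 2: "sqrt (1 - q) * cmod z < 1" using assms(3) s by (simp add: field_simps)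
  have "(sqrt (1 - q) * cmod z)\<^sup>2 < 1"
    unfolding power2_eq_square using mult_strict_mono'[OF 2 2] s by simp
  then show "(cmod z)\<^sup>2 * (1 - q) < 1" using assms by (simp add: power_mult_distrib mult.commute)
qed

lemma ps_abs:
  assumes q: "0 \<le> q" "q < 1" and f: "f \<in> H2q q" and z: "cmod z < 1 / sqrt (1 - q)"
  shows "summable (\<lambda>k. norm (f k * z ^ k))"
proof -
  have s1: "summable (\<lambda>k. qfact q k * (cmod (f k))\<^sup>2)" using f by (simp add: H2q_def)
  have s2: "summable (\<lambda>k. ((cmod z)\<^sup>2) ^ k / qfact q k)"
    using summable_qexp[OF q, of "(cmod z)\<^sup>2"] rad_facts[OF q z] by simp
  have "summable (\<lambda>k. (qfact q k * (cmod (f k))\<^sup>2 + ((cmod z)\<^sup>2) ^ k / qfact q k) / 2)"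
    using s1 s2 by (intro summable_divide summable_add)
  then show ?thesis
  proof (rule summable_comparison_test')
    fix k
    have "2 * cmod (f k) * cmod z ^ k \<le> qfact q k * (cmod (f k))\<^sup>2 + (cmod z ^ k)\<^sup>2 / qfact q k"
      by (rule amgm[OF qfact_pos[OF q(1)]])
    then show "norm (norm (f k * z ^ k)) \<le> (qfact q k * (cmod (f k))\<^sup>2 + ((cmod z)\<^sup>2) ^ k / qfact q k) / 2"
      by (simp add: norm_mult norm_power power_mult[symmetric] mult.commute[of 2] power_mult_distrib)
  qed
qed

primrec gs :: "complex \<Rightarrow> complex \<Rightarrow> (nat \<Rightarrow> complex) \<Rightarrow> nat \<Rightarrow> complex" where
  "gs a s f 0 = - a * f 0"
| "gs a s f (Suc k) = - a * f (Suc k) + s * (f k + cnj a * gs a s f k)"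

lemma pointwise_id:
  fixes g f a :: complex
  shows "(cmod (g + a * f))\<^sup>2 - (cmod (f + cnj a * g))\<^sup>2 = (1 - (cmod a)\<^sup>2) * ((cmod g)\<^sup>2 - (cmod f)\<^sup>2)"
  unfolding cmod_power2 by (simp add: algebra_simps power2_eq_square)


lemma partial_bound:
  assumes q: "0 \<le> q" "q < 1" and a: "cmod a < 1"
  defines "s \<equiv> complex_of_real (sqrt (1-q))"
  shows "(\<Sum>k<N. qfact q k * (cmod (gs a s f k))\<^sup>2) \<le> (\<Sum>k<N. qfact q k * (cmod (f k))\<^sup>2)"
proof -
  define g where "g = gs a s f"
  define W where "W = qfact q"
  define X where "X k = f k + cnj a * g k" for k
  define Y where "Y k = g k + a * f k" for k
  have W0: "W k > 0" for k using qfact_pos[OF q(1)] by (simp add: W_def)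
  have Y0: "Y 0 = 0" by (simp add: Y_def g_def)
  have YS: "Y (Suc k) = s * X k" for k by (simp add: Y_def X_def g_def algebra_simps)
  have s2: "(cmod s)\<^sup>2 = 1 - q" using q by (simp add: s_def)
  have key: "(\<Sum>k<N. W k * ((cmod (Y k))\<^sup>2 - (cmod (X k))\<^sup>2)) \<le> 0"
  proof (cases N)
    case 0 then show ?thesis by simp
  next
    case (Suc M)
    have "(\<Sum>k<Suc M. W k * (cmod (Y k))\<^sup>2) = (\<Sum>k<M. W (Suc k) * (cmod (Y (Suc k)))\<^sup>2)"
      by (subst sum.lessThan_Suc_shift) (simp add: Y0)
    also have "\<dots> = (\<Sum>k<M. (1 - q ^ Suc k) * W k * (cmod (X k))\<^sup>2)"
    proof (rule sum.cong[OF refl])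
      fix k
      have "W (Suc k) * (cmod (Y (Suc k)))\<^sup>2 = ((1 - q) * W (Suc k)) * (cmod (X k))\<^sup>2"
        by (simp add: YS norm_mult power_mult_distrib s2)
      also have "\<dots> = (1 - q ^ Suc k) * W k * (cmod (X k))\<^sup>2"
        using qfact_Suc_s[OF q, of k] by (simp add: W_def)
      finally show "W (Suc k) * (cmod (Y (Suc k)))\<^sup>2 = (1 - q ^ Suc k) * W k * (cmod (X k))\<^sup>2" .
    qed
    also have "\<dots> \<le> (\<Sum>k<M. W k * (cmod (X k))\<^sup>2)"
    proof (rule sum_mono)
      fix k
      have "0 \<le> q ^ Suc k * (W k * (cmod (X k))\<^sup>2)" using q W0[of k] by simp
      then show "(1 - q ^ Suc k) * W k * (cmod (X k))\<^sup>2 \<le> W k * (cmod (X k))\<^sup>2"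
        by (simp add: algebra_simps)
    qed
    also have "\<dots> \<le> (\<Sum>k<Suc M. W k * (cmod (X k))\<^sup>2)"
      using W0[of M] by simp
    finally show ?thesis using Suc by (simp add: sum_subtractf right_diff_distrib)
  qed
  have "(\<Sum>k<N. W k * ((cmod (Y k))\<^sup>2 - (cmod (X k))\<^sup>2))
      = (1 - (cmod a)\<^sup>2) * (\<Sum>k<N. W k * ((cmod (g k))\<^sup>2 - (cmod (f k))\<^sup>2))"
    unfolding sum_distrib_left
    by (rule sum.cong[OF refl]) (simp add: X_def Y_def pointwise_id)
  with key have "(1 - (cmod a)\<^sup>2) * (\<Sum>k<N. W k * ((cmod (g k))\<^sup>2 - (cmod (f k))\<^sup>2)) \<le> 0"
    by simp
  moreover have "1 - (cmod a)\<^sup>2 > 0" 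
    unfolding power2_eq_square using mult_strict_mono'[OF a a] by simp
  ultimately have "(\<Sum>k<N. W k * ((cmod (g k))\<^sup>2 - (cmod (f k))\<^sup>2)) \<le> 0"
    by (simp add: mult_le_0_iff)
  then show ?thesis by (simp add: g_def W_def sum_subtractf right_diff_distrib)
qed


lemma shift_sums:
  fixes h :: "nat \<Rightarrow> complex"
  assumes "h sums H"
  shows "(\<lambda>k. case k of 0 \<Rightarrow> 0 | Suc m \<Rightarrow> h m * z) sums (H * z)"
proof -
  have "(\<lambda>n. (case Suc n of 0 \<Rightarrow> 0 | Suc m \<Rightarrow> h m * z)) sums (H * z)"
    using sums_mult2[OF assms, of z] by simp
  then show ?thesis by (subst (asm) sums_Suc_iff) simp
qed

lemma wsq_nonneg: "0 \<le> q \<Longrightarrow> 0 \<le> qfact q k * (x::real)\<^sup>2"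
  using qfact_pos[of q k] by simp

lemma contraction:
  assumes q: "0 \<le> q" "q < 1" and a: "cmod a < 1" and f: "f \<in> H2q q"
  defines "s \<equiv> complex_of_real (sqrt (1-q))"
  shows "gs a s f \<in> H2q q" "H2q_norm q (gs a s f) \<le> H2q_norm q f"
    "cmod z < 1 / sqrt (1 - q) \<Longrightarrow> blaschke_q a q z * (\<Sum>k. f k * z ^ k) = (\<Sum>k. gs a s f k * z ^ k)"
proof -
  define g where "g = gs a s f"
  have sf: "summable (\<lambda>k. qfact q k * (cmod (f k))\<^sup>2)" using f by (simp add: H2q_def)
  have pb: "(\<Sum>k<N. qfact q k * (cmod (g k))\<^sup>2) \<le> (\<Sum>k. qfact q k * (cmod (f k))\<^sup>2)" for N
  proof -
    have "(\<Sum>k<N. qfact q k * (cmod (g k))\<^sup>2) \<le> (\<Sum>k<N. qfact q k * (cmod (f k))\<^sup>2)"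
      using partial_bound[OF q a] by (simp add: g_def s_def)
    also have "\<dots> \<le> (\<Sum>k. qfact q k * (cmod (f k))\<^sup>2)"
      by (intro sum_le_suminf[OF sf]) (auto intro: wsq_nonneg[OF q(1)])
    finally show ?thesis .
  qed
  have sg: "summable (\<lambda>k. qfact q k * (cmod (g k))\<^sup>2)"
    using pb
    by (intro bounded_imp_summable[where B = "(\<Sum>k. qfact q k * (cmod (f k))\<^sup>2)"])
       (auto intro: wsq_nonneg[OF q(1)] simp: lessThan_Suc_atMost[symmetric] simp del: sum.lessThan_Suc)
  then show "gs a s f \<in> H2q q" by (simp add: H2q_def g_def)
  have "(\<Sum>k. qfact q k * (cmod (g k))\<^sup>2) \<le> (\<Sum>k. qfact q k * (cmod (f k))\<^sup>2)"
    by (rule suminf_le_const[OF sg pb])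
  then show "H2q_norm q (gs a s f) \<le> H2q_norm q f" by (simp add: H2q_norm_def g_def)
  assume z: "cmod z < 1 / sqrt (1 - q)"
  have gH: "g \<in> H2q q" using sg by (simp add: H2q_def)
  define F where "F = (\<Sum>k. f k * z ^ k)"
  define G where "G = (\<Sum>k. g k * z ^ k)"
  have Fs: "(\<lambda>k. f k * z ^ k) sums F" unfolding F_def
    by (rule summable_sums[OF summable_norm_cancel[OF ps_abs[OF q f z]]])
  have Gs: "(\<lambda>k. g k * z ^ k) sums G" unfolding G_def
    by (rule summable_sums[OF summable_norm_cancel[OF ps_abs[OF q gH z]]])
  have L: "(\<lambda>k. g k * z ^ k + a * (f k * z ^ k)) sums (G + a * F)"
    by (intro sums_add sums_mult Fs Gs)
  have R: "(\<lambda>k. s * ((case k of 0 \<Rightarrow> 0 | Suc m \<Rightarrow> f m * z ^ m * z)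
              + cnj a * (case k of 0 \<Rightarrow> 0 | Suc m \<Rightarrow> g m * z ^ m * z))) sums (s * (F * z + cnj a * (G * z)))"
    by (intro sums_mult sums_add shift_sums Fs Gs)
  have eq: "(\<lambda>k. g k * z ^ k + a * (f k * z ^ k)) = (\<lambda>k. s * ((case k of 0 \<Rightarrow> 0 | Suc m \<Rightarrow> f m * z ^ m * z)
              + cnj a * (case k of 0 \<Rightarrow> 0 | Suc m \<Rightarrow> g m * z ^ m * z)))"
  proof
    fix k show "g k * z ^ k + a * (f k * z ^ k) = s * ((case k of 0 \<Rightarrow> 0 | Suc m \<Rightarrow> f m * z ^ m * z)
              + cnj a * (case k of 0 \<Rightarrow> 0 | Suc m \<Rightarrow> g m * z ^ m * z))"
      by (cases k) (simp_all add: g_def algebra_simps)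
  qed
  have main: "G + a * F = s * (F * z + cnj a * (G * z))"
    using sums_unique2[OF L R[folded eq]] .
  have sz: "cmod (s * z * cnj a) < 1"
  proof -
    have "cmod (s * z * cnj a) = (sqrt (1 - q) * cmod z) * cmod a"
      using q by (simp add: s_def norm_mult)
    also have "\<dots> < 1 * 1"
      using rad_facts(2)[OF q z] a q(2) by (intro mult_strict_mono') auto
    finally show ?thesis by simp
  qed
  then have nz: "1 - s * z * cnj a \<noteq> 0" by auto
  have "G * (1 - s * z * cnj a) = (s * z - a) * F" using main by (simp add: algebra_simps)
  then have "G = (s * z - a) / (1 - s * z * cnj a) * F" using nz by (simp add: field_simps)
  then show "blaschke_q a q z * (\<Sum>k. f k * z ^ k) = (\<Sum>k. gs a s f k * z ^ k)"
    by (simp add: blaschke_q_def blaschke_def s_def F_def G_def g_def)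
qed


lemma gsum_bound:
  assumes "\<forall>i<n. cmod (z i) \<le> M"
  shows "cmod (\<Sum>i<n. d i * z i ^ k) \<le> (\<Sum>i<n. cmod (d i)) * M ^ k"
proof -
  have "cmod (\<Sum>i<n. d i * z i ^ k) \<le> (\<Sum>i<n. cmod (d i) * cmod (z i) ^ k)"
    by (rule order_trans[OF norm_sum]) (simp add: norm_mult norm_power)
  also have "\<dots> \<le> (\<Sum>i<n. cmod (d i) * M ^ k)"
    using assms by (intro sum_mono mult_left_mono power_mono) auto
  finally show ?thesis by (simp add: sum_distrib_right)
qed

lemma summable_sq:
  assumes q: "0 \<le> q" "q < 1" and M: "0 \<le> M" "M\<^sup>2 * (1 - q) < 1" and hz: "\<forall>i<n. cmod (z i) \<le> M"
  shows "summable (\<lambda>k. (cmod (\<Sum>i<n. d i * z i ^ k))\<^sup>2 / qfact q k)"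
proof -
  define C where "C = (\<Sum>i<n. cmod (d i))"
  have C0: "C \<ge> 0" by (simp add: C_def sum_nonneg)
  have "summable (\<lambda>k. C\<^sup>2 * ((M\<^sup>2) ^ k / qfact q k))"
    using summable_qexp[OF q, of "M\<^sup>2"] M by (intro summable_mult) simp
  then show ?thesis
  proof (rule summable_comparison_test')
    fix k
    have b: "cmod (\<Sum>i<n. d i * z i ^ k) \<le> C * M ^ k" using gsum_bound[OF hz] by (simp add: C_def)
    have "(cmod (\<Sum>i<n. d i * z i ^ k))\<^sup>2 \<le> (C * M ^ k)\<^sup>2"
      by (rule power_mono[OF b]) simp
    then have "(cmod (\<Sum>i<n. d i * z i ^ k))\<^sup>2 / qfact q k \<le> (C * M ^ k)\<^sup>2 / qfact q k"
      using qfact_pos[OF q(1), of k] by (simp add: divide_right_mono)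
    then show "norm ((cmod (\<Sum>i<n. d i * z i ^ k))\<^sup>2 / qfact q k) \<le> C\<^sup>2 * ((M\<^sup>2) ^ k / qfact q k)"
      using qfact_pos[OF q(1), of k] by (simp add: power_mult_distrib power_mult[symmetric] mult.commute[of k 2])
  qed
qed


lemma key_ineq:
  fixes c z :: "nat \<Rightarrow> complex"
  assumes q: "0 \<le> q" "q < 1" and a: "cmod a < 1"
    and M: "0 \<le> M" "M\<^sup>2 * (1 - q) < 1" and hzM: "\<forall>i<n. cmod (z i) \<le> M"
    and hz: "\<forall>i<n. cmod (z i) < 1 / sqrt (1 - q)"
  defines "\<alpha> \<equiv> \<lambda>k. \<Sum>i<n. c i * z i ^ k"
    and "\<beta> \<equiv> \<lambda>k. \<Sum>i<n. (c i * blaschke_q a q (z i)) * z i ^ k"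
  shows "(\<Sum>k. (cmod (\<beta> k))\<^sup>2 / qfact q k) \<le> (\<Sum>k. (cmod (\<alpha> k))\<^sup>2 / qfact q k)"
proof -
  define w where "w = qfact q"
  have w0: "w k > 0" for k using qfact_pos[OF q(1)] by (simp add: w_def)
  have sa: "summable (\<lambda>k. (cmod (\<alpha> k))\<^sup>2 / w k)"
    unfolding \<alpha>_def w_def by (rule summable_sq[OF q M hzM])
  have sb: "summable (\<lambda>k. (cmod (\<beta> k))\<^sup>2 / w k)"
    unfolding \<beta>_def w_def by (rule summable_sq[OF q M hzM])
  define Bal where "Bal = (\<Sum>k. (cmod (\<alpha> k))\<^sup>2 / w k)"
  show ?thesis unfolding w_def[symmetric] Bal_def[symmetric]
  proof (rule suminf_le_const[OF sb])
    fix N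
    define AN where "AN = (\<Sum>k<N. (cmod (\<beta> k))\<^sup>2 / w k)"
    have AN0: "AN \<ge> 0" unfolding AN_def using w0 by (intro sum_nonneg) (simp add: less_imp_le)
    define f where "f k = (if k < N then cnj (\<beta> k) / of_real (w k) else 0)" for k
    have fz: "f k = 0" if "k \<notin> {..<N}" for k using that by (simp add: f_def)
    have wf: "w k * (cmod (f k))\<^sup>2 = (if k < N then (cmod (\<beta> k))\<^sup>2 / w k else 0)" for k
      using w0[of k] by (simp add: f_def norm_divide power_divide power2_eq_square)
    have fH: "f \<in> H2q q" unfolding H2q_def
      by (simp, rule summable_finite[of "{..<N}"]) (auto simp: fz)
    have nf: "(\<Sum>k. qfact q k * (cmod (f k))\<^sup>2) = AN"
      unfolding w_def[symmetric] wf AN_def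
      by (subst suminf_finite[of "{..<N}"]) auto
    define s where "s = complex_of_real (sqrt (1-q))"
    define g where "g = gs a s f"
    have gH: "g \<in> H2q q" and gn: "H2q_norm q g \<le> H2q_norm q f"
      using contraction(1,2)[OF q a fH] by (simp_all add: g_def s_def)
    have ident: "blaschke_q a q (z i) * (\<Sum>k. f k * z i ^ k) = (\<Sum>k. g k * z i ^ k)" if "i < n" for i
      using contraction(3)[OF q a fH] hz that by (simp add: g_def s_def)
    have sg: "summable (\<lambda>k. qfact q k * (cmod (g k))\<^sup>2)" using gH by (simp add: H2q_def)
    have sf: "summable (\<lambda>k. qfact q k * (cmod (f k))\<^sup>2)" using fH by (simp add: H2q_def)
    have ng: "(\<Sum>k. w k * (cmod (g k))\<^sup>2) \<le> AN"
    proof -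
      have "0 \<le> (\<Sum>k. qfact q k * (cmod (g k))\<^sup>2)" using sg
        by (intro suminf_nonneg) (auto intro: wsq_nonneg[OF q(1)])
      moreover have "0 \<le> (\<Sum>k. qfact q k * (cmod (f k))\<^sup>2)" using sf
        by (intro suminf_nonneg) (auto intro: wsq_nonneg[OF q(1)])
      ultimately show ?thesis using gn nf unfolding H2q_norm_def w_def by simp
    qed
    define Lam where "Lam = (\<Sum>i<n. c i * (\<Sum>k. g k * z i ^ k))"
    have "Lam = (\<Sum>i<n. c i * blaschke_q a q (z i) * (\<Sum>k<N. f k * z i ^ k))"
      unfolding Lam_def
    proof (rule sum.cong[OF refl])
      fix i assume "i \<in> {..<n}"
      moreover have "(\<Sum>k. f k * z i ^ k) = (\<Sum>k<N. f k * z i ^ k)"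
        by (rule suminf_finite) (auto simp: fz)
      ultimately have "(\<Sum>k. g k * z i ^ k) = blaschke_q a q (z i) * (\<Sum>k<N. f k * z i ^ k)"
        using ident[of i] by simp
      then show "c i * (\<Sum>k. g k * z i ^ k) = c i * blaschke_q a q (z i) * (\<Sum>k<N. f k * z i ^ k)"
        by simp
    qed
    also have "\<dots> = (\<Sum>k<N. f k * \<beta> k)"
      unfolding \<beta>_def sum_distrib_left sum_distrib_right
      by (subst sum.swap) (simp add: algebra_simps)
    also have "\<dots> = of_real AN"
      unfolding AN_def of_real_sum
    proof (rule sum.cong[OF refl])
      fix k assume "k \<in> {..<N}"
      then show "f k * \<beta> k = of_real ((cmod (\<beta> k))\<^sup>2 / w k)"
        using w0[of k] complex_norm_square[of "\<beta> k"] by (simp add: f_def mult.commute)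
    qed
    finally have Lam1: "Lam = of_real AN" .
    have sgz: "summable (\<lambda>k. g k * z i ^ k)" if "i < n" for i
      using summable_norm_cancel[OF ps_abs[OF q gH]] hz that by simp
    have "Lam = (\<Sum>i<n. \<Sum>k. c i * (g k * z i ^ k))"
      unfolding Lam_def by (intro sum.cong refl suminf_mult[symmetric] sgz) simp
    also have "\<dots> = (\<Sum>k. \<Sum>i<n. c i * (g k * z i ^ k))"
      by (rule suminf_sum[symmetric]) (intro summable_mult sgz, simp)
    also have "\<dots> = (\<Sum>k. g k * \<alpha> k)"
      unfolding \<alpha>_def sum_distrib_left by (simp add: algebra_simps)
    finally have Lam2: "Lam = (\<Sum>k. g k * \<alpha> k)" .
    have bnd: "norm (g k * \<alpha> k) \<le> (w k * (cmod (g k))\<^sup>2 + (cmod (\<alpha> k))\<^sup>2 / w k) / 2" for k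
      using amgm[OF w0[of k], of "cmod (g k)" "cmod (\<alpha> k)"] by (simp add: norm_mult)
    have sgw: "summable (\<lambda>k. w k * (cmod (g k))\<^sup>2)" using sg by (simp add: w_def)
    have sbnd: "summable (\<lambda>k. (w k * (cmod (g k))\<^sup>2 + (cmod (\<alpha> k))\<^sup>2 / w k) / 2)"
      by (intro summable_divide summable_add sgw sa)
    have snorm: "summable (\<lambda>k. norm (g k * \<alpha> k))"
      by (rule summable_comparison_test'[OF sbnd]) (use bnd in auto)
    have "AN = cmod Lam" using Lam1 AN0 by simp
    also have "\<dots> \<le> (\<Sum>k. norm (g k * \<alpha> k))" unfolding Lam2 by (rule summable_norm[OF snorm])
    also have "\<dots> \<le> (\<Sum>k. (w k * (cmod (g k))\<^sup>2 + (cmod (\<alpha> k))\<^sup>2 / w k) / 2)"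
      by (rule suminf_le[OF bnd snorm sbnd])
    also have "\<dots> = ((\<Sum>k. w k * (cmod (g k))\<^sup>2) + Bal) / 2"
      unfolding Bal_def by (simp add: suminf_divide[OF summable_add[OF sgw sa]] suminf_add[OF sgw sa])
    also have "\<dots> \<le> (AN + Bal) / 2" using ng by simp
    finally show "(\<Sum>k<N. (cmod (\<beta> k))\<^sup>2 / w k) \<le> Bal" unfolding AN_def by simp
  qed
qed


theorem proposition8p1:
  fixes q :: real and a :: complex
  assumes "0 \<le> q" and "q < 1" and "cmod a < 1"
  shows "(\<forall>f \<in> H2q q. \<exists>g \<in> H2q q.
            (\<forall>z. cmod z < 1 / sqrt (1 - q) \<longrightarrow>
                 blaschke_q a q z * (\<Sum>k. f k * z ^ k) = (\<Sum>k. g k * z ^ k))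
            \<and> H2q_norm q g \<le> H2q_norm q f)
       \<and> (\<forall>(n::nat) (z::nat \<Rightarrow> complex) (c::nat \<Rightarrow> complex).
            (\<forall>i<n. cmod (z i) < 1 / sqrt (1 - q)) \<longrightarrow>
            (let S = (\<Sum>i<n. \<Sum>j<n. c i * cnj (c j) *
                  ((1 - blaschke_q a q (z i) * cnj (blaschke_q a q (z j))) * Eq q (z i * cnj (z j))))
             in S \<in> \<real> \<and> 0 \<le> Re S))"
proof (intro conjI ballI allI impI)
  have q: "0 \<le> q" "q < 1" and a: "cmod a < 1" using assms by auto
  fix f assume f: "f \<in> H2q q"
  show "\<exists>g \<in> H2q q. (\<forall>z. cmod z < 1 / sqrt (1 - q) \<longrightarrow>
                 blaschke_q a q z * (\<Sum>k. f k * z ^ k) = (\<Sum>k. g k * z ^ k))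
            \<and> H2q_norm q g \<le> H2q_norm q f"
    using contraction[OF q a f] by blast
next
  have q: "0 \<le> q" "q < 1" and a: "cmod a < 1" using assms by auto
  fix n :: nat and z c :: "nat \<Rightarrow> complex"
  assume hz: "\<forall>i<n. cmod (z i) < 1 / sqrt (1 - q)"
  define B where "B i = blaschke_q a q (z i)" for i
  define w where "w = qfact q"
  have w0: "w k > 0" for k using qfact_pos[OF q(1)] by (simp add: w_def)
  define M where "M = Max (insert 0 ((\<lambda>i. cmod (z i)) ` {..<n}))"
  have M0: "0 \<le> M" and hzM: "\<forall>i<n. cmod (z i) \<le> M" unfolding M_def by auto
  have "0 < 1 / sqrt (1 - q)" using q by simp
  then have "M < 1 / sqrt (1 - q)" unfolding M_def using hz by (subst Max_less_iff) auto
  then have M2: "M\<^sup>2 * (1 - q) < 1" using rad_facts(1)[OF q, of "complex_of_real M"] M0 by simp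
  define \<alpha> where "\<alpha> k = (\<Sum>i<n. c i * z i ^ k)" for k
  define \<beta> where "\<beta> k = (\<Sum>i<n. (c i * B i) * z i ^ k)" for k
  have sa: "summable (\<lambda>k. (cmod (\<alpha> k))\<^sup>2 / w k)"
    unfolding \<alpha>_def w_def by (rule summable_sq[OF q M0 M2 hzM])
  have sb: "summable (\<lambda>k. (cmod (\<beta> k))\<^sup>2 / w k)"
    unfolding \<beta>_def w_def by (rule summable_sq[OF q M0 M2 hzM])
  have key: "(\<Sum>k. (cmod (\<beta> k))\<^sup>2 / w k) \<le> (\<Sum>k. (cmod (\<alpha> k))\<^sup>2 / w k)"
    unfolding \<alpha>_def \<beta>_def w_def B_def by (rule key_ineq[OF q a M0 M2 hzM hz])
  define e where "e i j k = (z i * cnj (z j)) ^ k / complex_of_real (w k)" for i j k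
  define X where "X i j = c i * cnj (c j) * (1 - B i * cnj (B j))" for i j
  have se: "summable (e i j)" if "i < n" "j < n" for i j
  proof (rule summable_comparison_test'[of "\<lambda>k. (M\<^sup>2) ^ k / w k"])
    show "summable (\<lambda>k. (M\<^sup>2) ^ k / w k)" using summable_qexp[OF q, of "M\<^sup>2"] M2 by (simp add: w_def)
    fix k
    have "cmod (z i) * cmod (z j) \<le> M * M"
      using hzM that M0 by (intro mult_mono) auto
    then have "(cmod (z i) * cmod (z j)) ^ k \<le> (M\<^sup>2) ^ k"
      by (intro power_mono) (auto simp: power2_eq_square)
    then show "norm (e i j k) \<le> (M\<^sup>2) ^ k / w k"
      using w0[of k] by (simp add: e_def norm_divide norm_mult norm_power divide_right_mono)
  qed
  define T where "T k = ((cmod (\<alpha> k))\<^sup>2 - (cmod (\<beta> k))\<^sup>2) / w k" for k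
  have sT: "summable T" unfolding T_def diff_divide_distrib by (intro summable_diff sa sb)
  have inner: "(\<Sum>i<n. \<Sum>j<n. X i j * e i j k) = complex_of_real (T k)" for k
  proof -
    have "(\<Sum>i<n. \<Sum>j<n. X i j * e i j k) =
          ((\<Sum>i<n. \<Sum>j<n. (c i * z i ^ k) * cnj (c j * z j ^ k))
          - (\<Sum>i<n. \<Sum>j<n. (c i * B i * z i ^ k) * cnj (c j * B j * z j ^ k))) / complex_of_real (w k)"
      unfolding sum_subtractf[symmetric] sum_divide_distrib
      by (intro sum.cong refl) (simp add: X_def e_def power_mult_distrib algebra_simps diff_divide_distrib)
    also have "\<dots> = (\<alpha> k * cnj (\<alpha> k) - \<beta> k * cnj (\<beta> k)) / complex_of_real (w k)"
      unfolding \<alpha>_def \<beta>_def cnj_sum sum_product by simp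
    also have "\<dots> = complex_of_real (T k)"
      unfolding T_def complex_norm_square[symmetric] by simp
    finally show ?thesis .
  qed
  have "(\<Sum>i<n. \<Sum>j<n. c i * cnj (c j) *
                  ((1 - blaschke_q a q (z i) * cnj (blaschke_q a q (z j))) * Eq q (z i * cnj (z j))))
      = (\<Sum>i<n. \<Sum>j<n. \<Sum>k. X i j * e i j k)"
  proof (intro sum.cong refl)
    fix i j assume "i \<in> {..<n}" "j \<in> {..<n}"
    then have "summable (e i j)" using se by simp
    then show "c i * cnj (c j) * ((1 - blaschke_q a q (z i) * cnj (blaschke_q a q (z j))) * Eq q (z i * cnj (z j)))
        = (\<Sum>k. X i j * e i j k)"
    proof -
      assume se': "summable (e i j)"
      have "Eq q (z i * cnj (z j)) = suminf (e i j)" unfolding Eq_def e_def[abs_def] w_def by simp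
      then have "c i * cnj (c j) * ((1 - blaschke_q a q (z i) * cnj (blaschke_q a q (z j))) * Eq q (z i * cnj (z j)))
          = X i j * suminf (e i j)" by (simp add: X_def B_def mult.assoc)
      also have "\<dots> = (\<Sum>k. X i j * e i j k)" by (rule suminf_mult[OF se', symmetric])
      finally show ?thesis .
    qed
  qed
  also have "\<dots> = (\<Sum>i<n. \<Sum>k. \<Sum>j<n. X i j * e i j k)"
    by (intro sum.cong refl suminf_sum[symmetric] summable_mult se) auto
  also have "\<dots> = (\<Sum>k. \<Sum>i<n. \<Sum>j<n. X i j * e i j k)"
    by (intro suminf_sum[symmetric] summable_sum summable_mult se) auto
  also have "\<dots> = (\<Sum>k. complex_of_real (T k))" by (simp add: inner)
  also have "\<dots> = complex_of_real (\<Sum>k. T k)"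
  proof -
    have "(\<lambda>k. complex_of_real (T k)) sums complex_of_real (suminf T)"
      using sums_of_real_iff summable_sums[OF sT] by blast
    then show ?thesis by (simp add: sums_iff)
  qed
  finally have Seq: "(\<Sum>i<n. \<Sum>j<n. c i * cnj (c j) *
                  ((1 - blaschke_q a q (z i) * cnj (blaschke_q a q (z j))) * Eq q (z i * cnj (z j))))
      = complex_of_real (\<Sum>k. T k)" .
  have "(\<Sum>k. T k) = (\<Sum>k. (cmod (\<alpha> k))\<^sup>2 / w k) - (\<Sum>k. (cmod (\<beta> k))\<^sup>2 / w k)"
    unfolding T_def diff_divide_distrib by (rule suminf_diff[OF sa sb, symmetric])
  then have "0 \<le> (\<Sum>k. T k)" using key by simp
  then show "let S = (\<Sum>i<n. \<Sum>j<n. c i * cnj (c j) *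
                  ((1 - blaschke_q a q (z i) * cnj (blaschke_q a q (z j))) * Eq q (z i * cnj (z j))))
             in S \<in> \<real> \<and> 0 \<le> Re S"
    unfolding Let_def Seq by simp
qed

end
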